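(* For $a_1,a_2\in[n]$, in $\mathbb{Q}[S_n]$, \[B_{a_1}B_{a_2}=\sum_{j=\max(a_1,a_2)}^{\min(a_1+a_2,n)}\frac{a_2!}{(j-a_1)!\,(a_1+a_2-j)!}\cdot\frac{a_1!}{(j-a_2)!}\,B_j.\]
   Context: Elements of $S_n$ are written in deck notation: a word $c_1\cdots c_n$ (a rearrangement of $1,\ldots,n$) is the deck with card $c_i$ in position $i$. Multiplication in $\mathbb{Q}[S_n]$: for $\sigma=c_1\cdots c_n$, $\tau=d_1\cdots d_n$, $\sigma\tau=c_{d_1}\cdots c_{d_n}$, extended bilinearly. For $a\in[n]$, $B_a$ is the sum of all words $c_1\cdots c_n\in S_n$ in which the letters $a+1,\ldots,n$ appear in increasing order from left to right. *)

theory Defs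
  imports Complex_Main
begin

text \<open>Permutations of [n] in deck notation: words c_1...c_n (lists, 0-indexed in Isabelle)
  that are rearrangements of 1,...,n.\<close>
definition words :: "nat \<Rightarrow> nat list set" where
  "words n = {w. length w = n \<and> distinct w \<and> set w = {1..n}}"

definition deck_mult :: "nat list \<Rightarrow> nat list \<Rightarrow> nat list" where
  "deck_mult \<sigma> \<tau> = map (\<lambda>d. \<sigma> ! (d - 1)) \<tau>"

text \<open>Elements of Q[S_n] as coefficient functions on words (zero off words n);
  bilinear extension of deck multiplication.\<close>
definition alg_mult :: "nat \<Rightarrow> (nat list \<Rightarrow> rat) \<Rightarrow> (nat list \<Rightarrow> rat) \<Rightarrow> (nat list \<Rightarrow> rat)" where
  "alg_mult n f g = (\<lambda>w. \<Sum>\<sigma>\<in>words n. \<Sum>\<tau>\<in>words n.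
      if deck_mult \<sigma> \<tau> = w then f \<sigma> * g \<tau> else 0)"

definition B :: "nat \<Rightarrow> nat \<Rightarrow> nat list \<Rightarrow> rat" where
  "B n a = (\<lambda>w. if w \<in> words n \<and>
      (\<forall>i j. i < j \<and> j < length w \<and> a < w ! i \<and> a < w ! j \<longrightarrow> w ! i < w ! j)
     then 1 else 0)"

end

theory Submission
  imports Defs
begin

definition incr :: "nat \<Rightarrow> nat list \<Rightarrow> bool" where
  "incr a w = (\<forall>i j. i < j \<and> j < length w \<and> a < w ! i \<and> a < w ! j \<longrightarrow> w ! i < w ! j)"

lemma sorted_wrt_filter_iff:
  "sorted_wrt (\<lambda>x y. a < x \<and> a < y \<longrightarrow> x < y) w \<longleftrightarrow> sorted_wrt (<) (filter (\<lambda>x. a < x) w)"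
  by (induction w) auto

lemma incr_iff: "incr a w \<longleftrightarrow> sorted_wrt (<) (filter (\<lambda>x. a < x) w)"
proof -
  have "incr a w \<longleftrightarrow> sorted_wrt (\<lambda>x y. a < x \<and> a < y \<longrightarrow> x < y) w"
    unfolding sorted_wrt_iff_nth_less[of _ w] incr_def by (intro iffI allI impI; metis)
  then show ?thesis using sorted_wrt_filter_iff by simp
qed

lemma B_eq: "B n a w = (if w \<in> words n \<and> incr a w then 1 else 0)"
  unfolding B_def incr_def by simp

lemma finite_words: "finite (words n)"
proof -
  have "words n \<subseteq> {xs. set xs \<subseteq> {1..n} \<and> length xs = n}" unfolding words_def by auto
  moreover have "finite {xs. set xs \<subseteq> {1..n} \<and> length xs = n}"
    by (rule finite_lists_length_eq) simp
  ultimately show ?thesis by (rule finite_subset)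
qed

definition idx :: "nat list \<Rightarrow> nat \<Rightarrow> nat" where
  "idx xs x = (THE i. i < length xs \<and> xs ! i = x)"

lemma idx_nth: "distinct xs \<Longrightarrow> i < length xs \<Longrightarrow> idx xs (xs ! i) = i"
  unfolding idx_def by (rule the_equality) (auto simp: nth_eq_iff_index_eq)

lemma idx_in: "distinct xs \<Longrightarrow> x \<in> set xs \<Longrightarrow> idx xs x < length xs \<and> xs ! idx xs x = x"
  by (metis idx_nth in_set_conv_nth)

lemma sorted_upt_unique:
  assumes "sorted_wrt (<) xs" "set xs = {a..<b}"
  shows "xs = [a..<b]"
proof -
  have "sorted xs" "distinct xs" using assms(1) by (auto simp: strict_sorted_iff)
  then show ?thesis using assms(2)
    by (simp add: sorted_sorted_list_of_set sorted_distinct_set_unique)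
qed

lemma set_words_idx: "\<sigma> \<in> words n \<Longrightarrow> (\<lambda>d. \<sigma> ! (d - 1)) ` {1..n} = set \<sigma>"
proof -
  assume s: "\<sigma> \<in> words n"
  have "(\<lambda>d. \<sigma> ! (d - 1)) ` {1..n} = (\<lambda>i. \<sigma> ! i) ` {..<n}"
  proof (rule set_eqI, rule iffI)
    fix x assume "x \<in> (\<lambda>d. \<sigma> ! (d - 1)) ` {1..n}"
    then obtain d where "d \<in> {1..n}" "x = \<sigma> ! (d - 1)" by blast
    then show "x \<in> (\<lambda>i. \<sigma> ! i) ` {..<n}" by (intro image_eqI[of _ _ "d - 1"]) auto
  next
    fix x assume "x \<in> (\<lambda>i. \<sigma> ! i) ` {..<n}"
    then obtain i where "i < n" "x = \<sigma> ! i" by blast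
    then show "x \<in> (\<lambda>d. \<sigma> ! (d - 1)) ` {1..n}" by (intro image_eqI[of _ _ "Suc i"]) auto
  qed
  also have "\<dots> = set \<sigma>"
  proof -
    have "set \<sigma> = (\<lambda>i. \<sigma> ! i) ` {..<length \<sigma>}" by (auto simp: in_set_conv_nth)
    then show ?thesis using s by (simp add: words_def)
  qed
  finally show ?thesis .
qed

lemma inj_words_idx: "\<sigma> \<in> words n \<Longrightarrow> inj_on (\<lambda>d. \<sigma> ! (d - 1)) {1..n}"
  unfolding inj_on_def words_def by (auto simp: nth_eq_iff_index_eq)

lemma deck_mult_words: "\<sigma> \<in> words n \<Longrightarrow> \<tau> \<in> words n \<Longrightarrow> deck_mult \<sigma> \<tau> \<in> words n"
proof -
  assume s: "\<sigma> \<in> words n" and t: "\<tau> \<in> words n"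
  have st: "set \<tau> = {1..n}" "distinct \<tau>" "length \<tau> = n" using t by (auto simp: words_def)
  have "distinct (deck_mult \<sigma> \<tau>)" unfolding deck_mult_def
    using inj_words_idx[OF s] st by (simp add: distinct_map)
  moreover have "set (deck_mult \<sigma> \<tau>) = {1..n}" unfolding deck_mult_def
    using set_words_idx[OF s] s st by (simp add: words_def)
  ultimately show ?thesis using st by (simp add: words_def deck_mult_def)
qed

definition PP :: "nat \<Rightarrow> nat \<Rightarrow> nat \<Rightarrow> nat list \<Rightarrow> (nat list \<times> nat list) set" where
  "PP n a1 a2 w = {(\<sigma>,\<tau>). \<sigma> \<in> words n \<and> \<tau> \<in> words n \<and> incr a1 \<sigma> \<and> incr a2 \<tau> \<and> deck_mult \<sigma> \<tau> = w}"

lemma alg_card: "alg_mult n (B n a1) (B n a2) w = of_nat (card (PP n a1 a2 w))"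
proof -
  let ?W = "words n"
  have "alg_mult n (B n a1) (B n a2) w =
     (\<Sum>\<sigma>\<in>?W. \<Sum>\<tau>\<in>?W. (\<lambda>p. if p \<in> PP n a1 a2 w then 1 else 0) (\<sigma>, \<tau>))"
    unfolding alg_mult_def
  proof (intro sum.cong refl)
    fix \<sigma> \<tau> assume "\<sigma> \<in> ?W" "\<tau> \<in> ?W"
    then show "(if deck_mult \<sigma> \<tau> = w then B n a1 \<sigma> * B n a2 \<tau> else 0) =
      (\<lambda>p. if p \<in> PP n a1 a2 w then 1 else 0) (\<sigma>, \<tau>)"
      by (simp add: PP_def B_eq)
  qed
  also have "\<dots> = (\<Sum>(\<sigma>,\<tau>)\<in>?W \<times> ?W. (\<lambda>p. if p \<in> PP n a1 a2 w then 1 else 0) (\<sigma>, \<tau>))"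
    by (rule sum.cartesian_product)
  also have "\<dots> = (\<Sum>p\<in>?W \<times> ?W. if p \<in> PP n a1 a2 w then 1 else 0)"
    by (simp add: case_prod_beta)
  also have "\<dots> = (\<Sum>p\<in>{p \<in> ?W \<times> ?W. p \<in> PP n a1 a2 w}. 1)"
    by (rule sum.inter_filter[symmetric]) (simp add: finite_words)
  also have "{p \<in> ?W \<times> ?W. p \<in> PP n a1 a2 w} = PP n a1 a2 w" unfolding PP_def by auto
  finally show ?thesis by simp
qed

lemma nth_in_take_iff: "distinct \<sigma> \<Longrightarrow> i < length \<sigma> \<Longrightarrow> \<sigma> ! i \<in> set (take k \<sigma>) \<longleftrightarrow> i < k"
proof
  assume d: "distinct \<sigma>" and i: "i < length \<sigma>" and "\<sigma> ! i \<in> set (take k \<sigma>)"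
  then obtain j where j: "j < length (take k \<sigma>)" "take k \<sigma> ! j = \<sigma> ! i" by (auto simp: in_set_conv_nth)
  then have "\<sigma> ! j = \<sigma> ! i" "j < length \<sigma>" by auto
  then have "j = i" using d i by (simp add: nth_eq_iff_index_eq)
  then show "i < k" using j by simp
next
  assume "distinct \<sigma>" and i: "i < length \<sigma>" and "i < k"
  then show "\<sigma> ! i \<in> set (take k \<sigma>)" by (auto simp: in_set_conv_nth intro!: exI[of _ i])
qed

lemma mem_take_idx: "distinct \<sigma> \<Longrightarrow> x \<in> set \<sigma> \<Longrightarrow> x \<in> set (take k \<sigma>) \<longleftrightarrow> idx \<sigma> x < k"
  by (metis idx_in nth_in_take_iff)

lemma words_upt: "\<tau> \<in> words n \<Longrightarrow> incr a \<tau> \<Longrightarrow> filter (\<lambda>d. a < d) \<tau> = [Suc a..<Suc n]"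
proof -
  assume t: "\<tau> \<in> words n" "incr a \<tau>"
  have "set (filter (\<lambda>d. a < d) \<tau>) = {Suc a..<Suc n}" using t(1) by (auto simp: words_def)
  then show ?thesis using t(2) by (intro sorted_upt_unique) (auto simp: incr_iff)
qed

lemma map_upt_drop: "length \<sigma> = n \<Longrightarrow> a \<le> n \<Longrightarrow> map (\<lambda>d. \<sigma> ! (d - 1)) [Suc a..<Suc n] = drop a \<sigma>"
  by (rule nth_equalityI) (simp_all del: upt_Suc)

lemma repr:
  assumes s: "\<sigma> \<in> words n" and t: "\<tau> \<in> words n" and it: "incr a2 \<tau>"
    and dm: "deck_mult \<sigma> \<tau> = w" and a2: "a2 \<le> n"
  shows "drop a2 \<sigma> = filter (\<lambda>x. x \<notin> set (take a2 \<sigma>)) w"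
proof -
  let ?f = "\<lambda>d. \<sigma> ! (d - 1)"
  have sd: "distinct \<sigma>" "length \<sigma> = n" using s by (auto simp: words_def)
  have "filter (\<lambda>x. x \<notin> set (take a2 \<sigma>)) w = map ?f (filter ((\<lambda>x. x \<notin> set (take a2 \<sigma>)) \<circ> ?f) \<tau>)"
    unfolding dm[symmetric] deck_mult_def filter_map by (rule refl)
  also have "filter ((\<lambda>x. x \<notin> set (take a2 \<sigma>)) \<circ> ?f) \<tau> = filter (\<lambda>d. a2 < d) \<tau>"
  proof (rule filter_cong[OF refl])
    fix d assume "d \<in> set \<tau>"
    then have "1 \<le> d" "d \<le> n" using t by (auto simp: words_def)
    then show "((\<lambda>x. x \<notin> set (take a2 \<sigma>)) \<circ> ?f) d = (a2 < d)"
      using nth_in_take_iff[OF sd(1), of "d - 1" a2] sd by auto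
  qed
  also have "\<dots> = [Suc a2..<Suc n]" using words_upt[OF t it] .
  also have "map ?f [Suc a2..<Suc n] = drop a2 \<sigma>" using map_upt_drop[OF sd(2) a2] .
  finally show ?thesis by simp
qed

definition CC :: "nat \<Rightarrow> nat \<Rightarrow> nat \<Rightarrow> nat list \<Rightarrow> nat list set" where
  "CC n a1 a2 w = {c. distinct c \<and> length c = a2 \<and> set c \<subseteq> {1..n} \<and>
      incr a1 (c @ filter (\<lambda>x. x \<notin> set c) w)}"

lemma constr:
  assumes w: "w \<in> words n" and c: "distinct c" "length c = a2" "set c \<subseteq> {1..n}"
    and a2: "a2 \<le> n"
  defines "\<sigma> \<equiv> c @ filter (\<lambda>x. x \<notin> set c) w"
  defines "\<tau> \<equiv> map (\<lambda>x. Suc (idx \<sigma> x)) w"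
  shows "\<sigma> \<in> words n" "\<tau> \<in> words n" "incr a2 \<tau>" "deck_mult \<sigma> \<tau> = w" "take a2 \<sigma> = c"
proof -
  have wd: "distinct w" "length w = n" "set w = {1..n}" using w by (simp_all add: words_def)
  have fs: "set (filter (\<lambda>x. x \<notin> set c) w) = {1..n} - set c" by (simp add: wd(3) set_diff_eq)
  have sd: "distinct \<sigma>" unfolding \<sigma>_def using c wd by auto
  have ss: "set \<sigma> = {1..n}" unfolding \<sigma>_def using c fs by auto
  have sl: "length \<sigma> = n" using distinct_card[OF sd] ss by simp
  show sw: "\<sigma> \<in> words n" using sd ss sl by (simp add: words_def)
  show tk: "take a2 \<sigma> = c" unfolding \<sigma>_def using c by simp
  have dr: "drop a2 \<sigma> = filter (\<lambda>x. x \<notin> set c) w" unfolding \<sigma>_def using c by simp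
  have ii: "inj_on (\<lambda>x. Suc (idx \<sigma> x)) (set w)"
  proof (rule inj_onI)
    fix x y assume "x \<in> set w" "y \<in> set w" "Suc (idx \<sigma> x) = Suc (idx \<sigma> y)"
    then have "x \<in> set \<sigma>" "y \<in> set \<sigma>" "idx \<sigma> x = idx \<sigma> y" using wd ss by auto
    then show "x = y" using idx_in[OF sd, of x] idx_in[OF sd, of y] by metis
  qed
  have "set \<tau> = (\<lambda>x. Suc (idx \<sigma> x)) ` set \<sigma>" unfolding \<tau>_def using wd ss by simp
  also have "\<dots> = (\<lambda>i. Suc (idx \<sigma> (\<sigma> ! i))) ` {..<n}"
  proof -
    have "set \<sigma> = (\<lambda>i. \<sigma> ! i) ` {..<n}" using sl by (auto simp: in_set_conv_nth)
    then show ?thesis by (simp add: image_image)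
  qed
  also have "\<dots> = Suc ` {..<n}" using idx_nth[OF sd] sl by (intro image_cong) auto
  also have "\<dots> = {1..n}" by (simp add: lessThan_atLeast0 atLeastLessThanSuc_atLeastAtMost)
  finally have ts: "set \<tau> = {1..n}" .
  have td: "distinct \<tau>" unfolding \<tau>_def using ii wd by (simp add: distinct_map)
  show "\<tau> \<in> words n" using ts td wd by (simp add: words_def \<tau>_def)
  show "deck_mult \<sigma> \<tau> = w" unfolding deck_mult_def \<tau>_def map_map
    by (rule map_idI) (use idx_in[OF sd] wd ss in auto)
  have "filter (\<lambda>d. a2 < d) \<tau> = map (\<lambda>x. Suc (idx \<sigma> x)) (filter (\<lambda>x. a2 < Suc (idx \<sigma> x)) w)"
    unfolding \<tau>_def by (simp add: filter_map comp_def)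
  also have "filter (\<lambda>x. a2 < Suc (idx \<sigma> x)) w = filter (\<lambda>x. x \<notin> set c) w"
  proof (rule filter_cong[OF refl])
    fix x assume "x \<in> set w"
    then have "x \<in> set \<sigma>" using wd ss by simp
    then show "(a2 < Suc (idx \<sigma> x)) = (x \<notin> set c)" using mem_take_idx[OF sd, of x a2] tk by auto
  qed
  also have "\<dots> = drop a2 \<sigma>" using dr by simp
  also have "map (\<lambda>x. Suc (idx \<sigma> x)) (drop a2 \<sigma>) = [Suc a2..<Suc n]"
    by (rule nth_equalityI) (use sl a2 idx_nth[OF sd] in \<open>auto simp del: upt_Suc\<close>)
  finally have eq: "filter (\<lambda>d. a2 < d) \<tau> = [Suc a2..<Suc n]" .
  show "incr a2 \<tau>" unfolding incr_iff eq by (simp del: upt_Suc)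
qed

lemma card_PP_CC:
  assumes w: "w \<in> words n" and a2: "a2 \<le> n"
  shows "card (PP n a1 a2 w) = card (CC n a1 a2 w)"
proof -
  let ?g = "\<lambda>p. take a2 (fst p)"
  have inj: "inj_on ?g (PP n a1 a2 w)"
  proof (rule inj_onI)
    fix p q assume p: "p \<in> PP n a1 a2 w" and q: "q \<in> PP n a1 a2 w" and e: "?g p = ?g q"
    obtain \<sigma> \<tau> where pe: "p = (\<sigma>, \<tau>)" by (cases p)
    obtain \<sigma>' \<tau>' where qe: "q = (\<sigma>', \<tau>')" by (cases q)
    have P1: "\<sigma> \<in> words n" "\<tau> \<in> words n" "incr a2 \<tau>" "deck_mult \<sigma> \<tau> = w"
      using p pe by (simp_all add: PP_def)
    have P2: "\<sigma>' \<in> words n" "\<tau>' \<in> words n" "incr a2 \<tau>'" "deck_mult \<sigma>' \<tau>' = w"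
      using q qe by (simp_all add: PP_def)
    have tk: "take a2 \<sigma> = take a2 \<sigma>'" using e pe qe by simp
    have "drop a2 \<sigma> = drop a2 \<sigma>'" using repr[OF P1 a2] repr[OF P2 a2] tk by simp
    then have ss: "\<sigma> = \<sigma>'" using tk by (metis append_take_drop_id)
    have "map (\<lambda>d. \<sigma> ! (d - 1)) \<tau> = map (\<lambda>d. \<sigma> ! (d - 1)) \<tau>'"
      using P1(4) P2(4) ss by (simp add: deck_mult_def)
    moreover have "inj_on (\<lambda>d. \<sigma> ! (d - 1)) (set \<tau> \<union> set \<tau>')"
      using inj_words_idx[OF P1(1)] P1(2) P2(2) by (simp add: words_def)
    ultimately have "\<tau> = \<tau>'" using inj_on_map_eq_map by blast
    then show "p = q" using pe qe ss by simp
  qed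
  have img: "?g ` PP n a1 a2 w = CC n a1 a2 w"
  proof (rule set_eqI, rule iffI)
    fix c assume "c \<in> ?g ` PP n a1 a2 w"
    then obtain \<sigma> \<tau> where p: "(\<sigma>, \<tau>) \<in> PP n a1 a2 w" and ce: "c = take a2 \<sigma>" by auto
    have P1: "\<sigma> \<in> words n" "\<tau> \<in> words n" "incr a2 \<tau>" "deck_mult \<sigma> \<tau> = w" "incr a1 \<sigma>"
      using p by (simp_all add: PP_def)
    have "\<sigma> = c @ filter (\<lambda>x. x \<notin> set c) w" using repr[OF P1(1-4) a2] ce
      by (metis append_take_drop_id)
    moreover have "distinct c" "length c = a2" "set c \<subseteq> {1..n}"
      using P1(1) ce a2 set_take_subset[of a2 \<sigma>] by (auto simp: words_def)
    ultimately show "c \<in> CC n a1 a2 w" using P1(5) by (simp add: CC_def)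
  next
    fix c assume "c \<in> CC n a1 a2 w"
    then have c: "distinct c" "length c = a2" "set c \<subseteq> {1..n}"
      and i1: "incr a1 (c @ filter (\<lambda>x. x \<notin> set c) w)" by (simp_all add: CC_def)
    note K = constr[OF w c a2]
    let ?s = "c @ filter (\<lambda>x. x \<notin> set c) w"
    let ?t = "map (\<lambda>x. Suc (idx ?s x)) w"
    have "(?s, ?t) \<in> PP n a1 a2 w" using K i1 by (simp add: PP_def)
    moreover have "c = ?g (?s, ?t)" using K by simp
    ultimately show "c \<in> ?g ` PP n a1 a2 w" by blast
  qed
  show ?thesis using card_image[OF inj] img by simp
qed

lemma downclosed_eq:
  assumes fin: "finite S" and sub: "S \<subseteq> {Suc a..}" and dc: "\<And>x y. x \<in> S \<Longrightarrow> a < y \<Longrightarrow> y \<le> x \<Longrightarrow> y \<in> S"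
  shows "S = {Suc a..<Suc a + card S}"
proof -
  have "S \<subseteq> {Suc a..<Suc a + card S}"
  proof
    fix x assume x: "x \<in> S"
    have "x \<ge> Suc a" using x sub by auto
    moreover have "x < Suc a + card S"
    proof (rule ccontr)
      assume "\<not> x < Suc a + card S"
      then have "{Suc a..x} \<subseteq> S" using dc[OF x] by auto
      then have "card {Suc a..x} \<le> card S" using fin by (rule card_mono[rotated])
      then show False using \<open>\<not> x < Suc a + card S\<close> by simp
    qed
    ultimately show "x \<in> {Suc a..<Suc a + card S}" by simp
  qed
  moreover have "card {Suc a..<Suc a + card S} = card S" by simp
  ultimately show ?thesis by (intro card_subset_eq) simp_all
qed

lemma Bl_eq:
  assumes sA: "set (filter (\<lambda>x. a1 < x) c) = {Suc a1..<Suc (a1 + r)}"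
  shows "filter (\<lambda>x. a1 < x) (filter (\<lambda>x. x \<notin> set c) w) = filter (\<lambda>x. a1 + r < x) w"
  unfolding filter_filter
proof (rule filter_cong[OF refl])
  fix x
  have m: "x \<in> set c \<and> a1 < x \<longleftrightarrow> x \<in> {Suc a1..<Suc (a1 + r)}"
    using sA[symmetric] by (simp only: set_filter mem_Collect_eq)
  show "(x \<notin> set c \<and> a1 < x) = (a1 + r < x)"
  proof (cases "a1 < x \<and> x \<le> a1 + r")
    case True
    then have "x \<in> set c" using m by simp
    then show ?thesis using True by simp
  next
    case False
    then have "x \<notin> {Suc a1..<Suc (a1 + r)}" by auto
    then have "a1 < x \<Longrightarrow> x \<notin> set c" using m by blast
    then show ?thesis using False by auto
  qed
qed

lemma split_incr:
  fixes a1 :: nat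
  assumes w: "w \<in> words n" and c: "distinct c" "set c \<subseteq> {1..n}"
  defines "r \<equiv> length (filter (\<lambda>x. a1 < x) c)"
  shows "incr a1 (c @ filter (\<lambda>x. x \<notin> set c) w) \<longleftrightarrow>
    (filter (\<lambda>x. a1 < x) c = [Suc a1..<Suc (a1 + r)] \<and> incr (a1 + r) w)"
proof -
  let ?A = "filter (\<lambda>x. a1 < x) c"
  let ?Bl = "filter (\<lambda>x. a1 < x) (filter (\<lambda>x. x \<notin> set c) w)"
  have wd: "set w = {1..n}" using w by (simp add: words_def)
  have e: "incr a1 (c @ filter (\<lambda>x. x \<notin> set c) w) \<longleftrightarrow>
      sorted_wrt (<) ?A \<and> sorted_wrt (<) ?Bl \<and> (\<forall>x\<in>set ?A. \<forall>y\<in>set ?Bl. x < y)"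
    unfolding incr_iff filter_append sorted_wrt_append by simp
  show ?thesis
  proof
    assume L: "incr a1 (c @ filter (\<lambda>x. x \<notin> set c) w)"
    then have s1: "sorted_wrt (<) ?A" and s2: "sorted_wrt (<) ?Bl"
      and cr: "\<forall>x\<in>set ?A. \<forall>y\<in>set ?Bl. x < y" using e by blast+
    have cardA: "card (set ?A) = r" unfolding r_def using c(1) by (intro distinct_card) simp
    have "set ?A = {Suc a1..<Suc a1 + card (set ?A)}"
    proof (rule downclosed_eq)
      show "set ?A \<subseteq> {Suc a1..}" by auto
      fix x y assume x: "x \<in> set ?A" and y: "a1 < y" "y \<le> x"
      show "y \<in> set ?A"
      proof (rule ccontr)
        assume ny: "y \<notin> set ?A"
        have "x \<le> n" using x c by auto
        have "y \<notin> set c" using ny y(1) by simp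
        moreover have "y \<in> set w" using wd y \<open>x \<le> n\<close> by simp
        ultimately have yB: "y \<in> set ?Bl" using y(1) by simp
        have "x < y" using cr x yB by blast
        then show False using y(2) by simp
      qed
    qed simp
    then have sA: "set ?A = {Suc a1..<Suc (a1 + r)}" using cardA by simp
    have A: "?A = [Suc a1..<Suc (a1 + r)]" by (rule sorted_upt_unique[OF s1 sA])
    have "incr (a1 + r) w" using s2 unfolding Bl_eq[OF sA] incr_iff .
    then show "?A = [Suc a1..<Suc (a1 + r)] \<and> incr (a1 + r) w" using A by simp
  next
    assume R: "?A = [Suc a1..<Suc (a1 + r)] \<and> incr (a1 + r) w"
    then have sA: "set ?A = {Suc a1..<Suc (a1 + r)}" by (simp del: upt_Suc)
    have s1: "sorted_wrt (<) ?A" using R by (simp del: upt_Suc)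
    have s2: "sorted_wrt (<) ?Bl" using R unfolding Bl_eq[OF sA] incr_iff by simp
    have cr: "\<forall>x\<in>set ?A. \<forall>y\<in>set ?Bl. x < y"
      unfolding Bl_eq[OF sA] sA by auto
    show "incr a1 (c @ filter (\<lambda>x. x \<notin> set c) w)" using e s1 s2 cr by blast
  qed
qed

definition Cr :: "nat \<Rightarrow> nat \<Rightarrow> nat \<Rightarrow> nat \<Rightarrow> nat list set" where
  "Cr n a1 a2 r = {c. distinct c \<and> length c = a2 \<and> set c \<subseteq> {1..n} \<and>
     filter (\<lambda>x. a1 < x) c = [Suc a1..<Suc (a1 + r)]}"

lemma finite_Cr: "finite (Cr n a1 a2 r)"
proof -
  have "Cr n a1 a2 r \<subseteq> {xs. set xs \<subseteq> {1..n} \<and> length xs = a2}" unfolding Cr_def by auto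
  moreover have "finite {xs. set xs \<subseteq> {1..n} \<and> length xs = a2}"
    by (rule finite_lists_length_eq) simp
  ultimately show ?thesis by (rule finite_subset)
qed

lemma card_CC:
  assumes w: "w \<in> words n"
  shows "card (CC n a1 a2 w) = (\<Sum>r\<in>{0..a2}. if incr (a1 + r) w then card (Cr n a1 a2 r) else 0)"
proof -
  let ?D = "\<lambda>r. {c \<in> Cr n a1 a2 r. incr (a1 + r) w}"
  have eq: "CC n a1 a2 w = (\<Union>r\<in>{0..a2}. ?D r)"
  proof (rule set_eqI, rule iffI)
    fix c assume "c \<in> CC n a1 a2 w"
    then have c: "distinct c" "length c = a2" "set c \<subseteq> {1..n}"
      and i1: "incr a1 (c @ filter (\<lambda>x. x \<notin> set c) w)" unfolding CC_def mem_Collect_eq by blast+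
    define r where "r = length (filter (\<lambda>x. a1 < x) c)"
    have rl: "r \<le> a2" unfolding r_def using c(2) length_filter_le[of _ c] by simp
    moreover have "filter (\<lambda>x. a1 < x) c = [Suc a1..<Suc (a1 + r)] \<and> incr (a1 + r) w"
      unfolding r_def using split_incr[OF w c(1,3), of a1] i1 by blast
    then have cD: "c \<in> ?D r" unfolding Cr_def mem_Collect_eq using c by blast
    show "c \<in> (\<Union>r\<in>{0..a2}. ?D r)" by (rule UN_I[of r]) (use rl cD in simp_all)
  next
    fix c assume "c \<in> (\<Union>r\<in>{0..a2}. ?D r)"
    then obtain r where "c \<in> ?D r" by blast
    then have c: "distinct c" "length c = a2" "set c \<subseteq> {1..n}"
      and f: "filter (\<lambda>x. a1 < x) c = [Suc a1..<Suc (a1 + r)]" and i: "incr (a1 + r) w"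
      unfolding Cr_def mem_Collect_eq by blast+
    have len: "length (filter (\<lambda>x. a1 < x) c) = r" using f by (simp del: upt_Suc)
    have "incr a1 (c @ filter (\<lambda>x. x \<notin> set c) w) \<longleftrightarrow>
      (filter (\<lambda>x. a1 < x) c = [Suc a1..<Suc (a1 + r)] \<and> incr (a1 + r) w)"
      using split_incr[OF w c(1,3), of a1] by (simp only: len)
    then have "incr a1 (c @ filter (\<lambda>x. x \<notin> set c) w)" using f i by blast
    then show "c \<in> CC n a1 a2 w" unfolding CC_def mem_Collect_eq using c by blast
  qed
  have "card (\<Union>r\<in>{0..a2}. ?D r) = (\<Sum>r\<in>{0..a2}. card (?D r))"
  proof (rule card_UN_disjoint)
    show "finite {0..a2}" by simp
    show "\<forall>r\<in>{0..a2}. finite (?D r)" using finite_Cr by simp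
    show "\<forall>r\<in>{0..a2}. \<forall>r'\<in>{0..a2}. r \<noteq> r' \<longrightarrow> ?D r \<inter> ?D r' = {}"
    proof (intro ballI impI)
      fix r r' :: nat assume "r \<noteq> r'"
      show "?D r \<inter> ?D r' = {}"
      proof (rule ccontr)
        assume "?D r \<inter> ?D r' \<noteq> {}"
        then obtain c where "c \<in> ?D r" "c \<in> ?D r'" by blast
        then have "filter (\<lambda>x. a1 < x) c = [Suc a1..<Suc (a1 + r)]"
           "filter (\<lambda>x. a1 < x) c = [Suc a1..<Suc (a1 + r')]" by (simp_all add: Cr_def del: upt_Suc)
        then have "length [Suc a1..<Suc (a1 + r)] = length [Suc a1..<Suc (a1 + r')]" by simp
        then show False using \<open>r \<noteq> r'\<close> by (simp del: upt_Suc)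
      qed
    qed
  qed
  also have "\<dots> = (\<Sum>r\<in>{0..a2}. if incr (a1 + r) w then card (Cr n a1 a2 r) else 0)"
    by (intro sum.cong refl) simp
  finally show ?thesis using eq by simp
qed

declare upt_Suc[simp del]

definition Dl :: "nat \<Rightarrow> nat \<Rightarrow> nat list set" where
  "Dl a k = {s. length s = k \<and> distinct s \<and> set s \<subseteq> {1..a}}"

lemma finite_Dl: "finite (Dl a k)"
proof -
  have "Dl a k \<subseteq> {xs. set xs \<subseteq> {1..a} \<and> length xs = k}" unfolding Dl_def by auto
  moreover have "finite {xs. set xs \<subseteq> {1..a} \<and> length xs = k}"
    by (rule finite_lists_length_eq) simp
  ultimately show ?thesis by (rule finite_subset)
qed

lemma filter_in_shuffles:
  assumes "z \<in> shuffles xs ys"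
  shows "filter P z \<in> shuffles (filter P xs) (filter P ys)"
proof -
  have "filter P z \<in> filter P ` shuffles xs ys" using assms by (rule imageI)
  then show ?thesis by (simp only: filter_shuffles)
qed

lemma card_Cr:
  assumes r: "r \<le> a2" and rn: "a1 + r \<le> n"
  shows "card (Cr n a1 a2 r) = card (Dl a1 (a2 - r)) * (a2 choose r)"
proof -
  let ?L = "[Suc a1..<Suc (a1 + r)]"
  let ?P = "\<lambda>x. a1 < x"
  let ?Q = "\<lambda>x. \<not> a1 < x"
  have sL: "set ?L = {Suc a1..<Suc (a1 + r)}" by simp
  have fPL: "filter ?P ?L = ?L" by (rule filter_True) (simp del: upt_Suc)
  have fQL: "filter ?Q ?L = []" by (rule filter_False) (simp del: upt_Suc)
  have lL: "length ?L = r" by simp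
  have eq: "Cr n a1 a2 r = (\<Union>s\<in>Dl a1 (a2 - r). shuffles s ?L)"
  proof (rule set_eqI, rule iffI)
    fix c assume "c \<in> Cr n a1 a2 r"
    then have c: "distinct c" "length c = a2" "set c \<subseteq> {1..n}" and f: "filter ?P c = ?L"
      unfolding Cr_def mem_Collect_eq by blast+
    let ?s = "filter ?Q c"
    have "c \<in> shuffles (filter ?P c) ?s" by (rule partition_in_shuffles)
    then have cs: "c \<in> shuffles ?s ?L" using f by (simp add: shuffles_commutes)
    have "length (filter ?P c) + length ?s = length c" by (rule sum_length_filter_compl)
    then have "length ?s = a2 - r" using f c(2) lL by simp
    moreover have "distinct ?s" using c(1) by simp
    moreover have "set ?s \<subseteq> {1..a1}" using c(3) by auto
    ultimately have "?s \<in> Dl a1 (a2 - r)" unfolding Dl_def by blast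
    then show "c \<in> (\<Union>s\<in>Dl a1 (a2 - r). shuffles s ?L)" using cs by blast
  next
    fix c assume "c \<in> (\<Union>s\<in>Dl a1 (a2 - r). shuffles s ?L)"
    then obtain s where sD: "s \<in> Dl a1 (a2 - r)" and cs: "c \<in> shuffles s ?L" by blast
    have s: "length s = a2 - r" "distinct s" "set s \<subseteq> {1..a1}" using sD unfolding Dl_def by blast+
    have disj: "set s \<inter> set ?L = {}" using s(3) by auto
    have "distinct c" by (rule distinct_disjoint_shuffles[OF s(2) _ disj cs]) simp
    moreover have "length c = a2" using length_shuffles[OF cs] s(1) lL r by simp
    moreover have "set c \<subseteq> {1..n}" using set_shuffles[OF cs] s(3) rn by auto
    moreover have "filter ?P c = ?L"
    proof -
      have "filter ?P s = []" by (rule filter_False) (use s(3) in auto)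
      then show ?thesis using filter_in_shuffles[OF cs, of ?P] fPL by simp
    qed
    ultimately show "c \<in> Cr n a1 a2 r" unfolding Cr_def mem_Collect_eq by blast
  qed
  have "card (\<Union>s\<in>Dl a1 (a2 - r). shuffles s ?L) = (\<Sum>s\<in>Dl a1 (a2 - r). card (shuffles s ?L))"
  proof (rule card_UN_disjoint)
    show "finite (Dl a1 (a2 - r))" by (rule finite_Dl)
    show "\<forall>s\<in>Dl a1 (a2 - r). finite (shuffles s ?L)" by simp
    show "\<forall>s\<in>Dl a1 (a2 - r). \<forall>s'\<in>Dl a1 (a2 - r). s \<noteq> s' \<longrightarrow> shuffles s ?L \<inter> shuffles s' ?L = {}"
    proof (intro ballI impI)
      fix s s' assume sD: "s \<in> Dl a1 (a2 - r)" and sD': "s' \<in> Dl a1 (a2 - r)" and ne: "s \<noteq> s'"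
      have fs: "filter ?Q s = s" by (rule filter_True) (use sD in \<open>auto simp: Dl_def\<close>)
      have fs': "filter ?Q s' = s'" by (rule filter_True) (use sD' in \<open>auto simp: Dl_def\<close>)
      show "shuffles s ?L \<inter> shuffles s' ?L = {}"
      proof (rule ccontr)
        assume "shuffles s ?L \<inter> shuffles s' ?L \<noteq> {}"
        then obtain z where z: "z \<in> shuffles s ?L" "z \<in> shuffles s' ?L" by blast
        have "filter ?Q z = s" using filter_in_shuffles[OF z(1), of ?Q] fs fQL by simp
        moreover have "filter ?Q z = s'" using filter_in_shuffles[OF z(2), of ?Q] fs' fQL by simp
        ultimately show False using ne by simp
      qed
    qed
  qed
  also have "\<dots> = (\<Sum>s\<in>Dl a1 (a2 - r). a2 choose r)"
  proof (rule sum.cong[OF refl])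
    fix s assume sD: "s \<in> Dl a1 (a2 - r)"
    have s: "length s = a2 - r" "set s \<subseteq> {1..a1}" using sD unfolding Dl_def by blast+
    have disj: "set s \<inter> set ?L = {}" using s(2) by auto
    have "card (shuffles s ?L) = (length s + length ?L) choose length s"
      by (rule card_disjoint_shuffles[OF disj])
    also have "\<dots> = a2 choose (a2 - r)" using s(1) lL r by simp
    also have "\<dots> = a2 choose r" using binomial_symmetric[OF r] by simp
    finally show "card (shuffles s ?L) = a2 choose r" .
  qed
  also have "\<dots> = card (Dl a1 (a2 - r)) * (a2 choose r)" by simp
  finally show ?thesis using eq by simp
qed

lemma card_Cr_empty:
  assumes "n < a1 + r" "a1 \<le> n"
  shows "Cr n a1 a2 r = {}"
proof (rule ccontr)
  assume "Cr n a1 a2 r \<noteq> {}"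
  then obtain c where "c \<in> Cr n a1 a2 r" by blast
  then have c: "set c \<subseteq> {1..n}" and f: "filter (\<lambda>x. a1 < x) c = [Suc a1..<Suc (a1 + r)]"
    unfolding Cr_def mem_Collect_eq by blast+
  have "a1 + r \<in> set [Suc a1..<Suc (a1 + r)]" using assms by simp
  then have "a1 + r \<in> set c" unfolding f[symmetric] by simp
  then show False using c assms by auto
qed

lemma card_Dl:
  "card (Dl a k) = (if k \<le> a then fact a div fact (a - k) else 0)"
proof (cases "k \<le> a")
  case True
  have "card (Dl a k) = \<Prod>{card {1..a} - k + 1 .. card {1..a}}"
    unfolding Dl_def by (rule card_lists_distinct_length_eq) (use True in simp_all)
  also have "\<dots> = fact a div fact (a - k)" using True by (simp add: fact_div_fact)
  finally show ?thesis using True by simp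
next
  case False
  have "Dl a k = {}"
  proof (rule ccontr)
    assume "Dl a k \<noteq> {}"
    then obtain s where "length s = k" "distinct s" "set s \<subseteq> {1..a}" unfolding Dl_def by blast
    then have "k \<le> card {1..a}" by (metis card_mono distinct_card finite_atLeastAtMost)
    then show False using False by simp
  qed
  then show ?thesis using False by simp
qed

lemma fact_div_rat: "k \<le> m \<Longrightarrow> (of_nat (fact m div fact k) :: rat) = fact m / fact k"
proof -
  assume "k \<le> m"
  then have "fact m = (fact m div fact k) * (fact k :: nat)" using fact_dvd[of k m] by (metis dvd_div_mult_self)
  then have "(fact m :: rat) = of_nat (fact m div fact k) * fact k" by (metis of_nat_fact of_nat_mult)
  then show ?thesis by (simp add: field_simps)
qed

theorem mainTheorem7:
  fixes n a1 a2 :: nat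
  assumes "a1 \<in> {1..n}" and "a2 \<in> {1..n}"
  shows "alg_mult n (B n a1) (B n a2) =
    (\<lambda>w. \<Sum>j = max a1 a2..min (a1 + a2) n.
        ((fact a2 :: rat) / (fact (j - a1) * fact (a1 + a2 - j))) *
        ((fact a1 :: rat) / fact (j - a2)) * B n j w)"
proof
  fix w
  have a1n: "a1 \<le> n" and a2n: "a2 \<le> n" using assms by auto
  let ?coef = "\<lambda>j. ((fact a2 :: rat) / (fact (j - a1) * fact (a1 + a2 - j))) *
        ((fact a1 :: rat) / fact (j - a2))"
  show "alg_mult n (B n a1) (B n a2) w = (\<Sum>j = max a1 a2..min (a1 + a2) n. ?coef j * B n j w)"
  proof (cases "w \<in> words n")
    case False
    have "PP n a1 a2 w = {}" using False deck_mult_words unfolding PP_def by blast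
    then have "alg_mult n (B n a1) (B n a2) w = 0" using alg_card by simp
    moreover have "(\<Sum>j = max a1 a2..min (a1 + a2) n. ?coef j * B n j w) = 0"
      using False by (simp add: B_eq)
    ultimately show ?thesis by simp
  next
    case True
    note w = True
    define g where "g r = (if incr (a1 + r) w then card (Cr n a1 a2 r) else 0)" for r
    have "alg_mult n (B n a1) (B n a2) w = of_nat (\<Sum>r\<in>{0..a2}. g r)"
      using alg_card card_PP_CC[OF w a2n] card_CC[OF w] unfolding g_def by simp
    also have "\<dots> = (\<Sum>r\<in>{0..a2}. (\<lambda>j. (of_nat (g (j - a1)) :: rat)) (r + a1))"
      by (simp add: of_nat_sum)
    also have "\<dots> = (\<Sum>j\<in>{0 + a1..a2 + a1}. (of_nat (g (j - a1)) :: rat))"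
      by (rule sum.shift_bounds_cl_nat_ivl[symmetric])
    also have "\<dots> = (\<Sum>j\<in>{max a1 a2..min (a1 + a2) n}. (of_nat (g (j - a1)) :: rat))"
    proof (rule sum.mono_neutral_right)
      show "finite {0 + a1..a2 + a1}" by simp
      show "{max a1 a2..min (a1 + a2) n} \<subseteq> {0 + a1..a2 + a1}" by auto
      show "\<forall>j\<in>{0 + a1..a2 + a1} - {max a1 a2..min (a1 + a2) n}. (of_nat (g (j - a1)) :: rat) = 0"
      proof
        fix j assume j: "j \<in> {0 + a1..a2 + a1} - {max a1 a2..min (a1 + a2) n}"
        then have ja: "a1 \<le> j" "j \<le> a1 + a2" and jo: "j < a2 \<or> n < j" by auto
        show "(of_nat (g (j - a1)) :: rat) = 0"
        proof (cases "n < j")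
          case True
          then have "Cr n a1 a2 (j - a1) = {}" using card_Cr_empty[of n a1 "j - a1" a2] ja a1n by simp
          then show ?thesis unfolding g_def by simp
        next
          case False
          then have "j < a2" "a1 + (j - a1) \<le> n" using jo ja by auto
          then have "card (Cr n a1 a2 (j - a1)) = 0"
            using card_Cr[of "j - a1" a2 a1 n] card_Dl[of a1 "a2 - (j - a1)"] ja by simp
          then show ?thesis unfolding g_def by simp
        qed
      qed
    qed
    also have "\<dots> = (\<Sum>j = max a1 a2..min (a1 + a2) n. ?coef j * B n j w)"
    proof (rule sum.cong[OF refl])
      fix j assume j: "j \<in> {max a1 a2..min (a1 + a2) n}"
      then have ja: "a1 \<le> j" "a2 \<le> j" "j \<le> a1 + a2" "j \<le> n" by auto
      have r: "j - a1 \<le> a2" "a1 + (j - a1) \<le> n" using ja by auto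
      have k: "a2 - (j - a1) \<le> a1" "a1 - (a2 - (j - a1)) = j - a2" "a2 - (j - a1) = a1 + a2 - j"
        using ja by auto
      have cC: "card (Cr n a1 a2 (j - a1)) = (fact a1 div fact (j - a2)) * (a2 choose (j - a1))"
        using card_Cr[OF r] card_Dl[of a1 "a2 - (j - a1)"] k by simp
      have "(of_nat (card (Cr n a1 a2 (j - a1))) :: rat) = ?coef j"
      proof -
        have "(of_nat (card (Cr n a1 a2 (j - a1))) :: rat) =
            of_nat (fact a1 div fact (j - a2)) * of_nat (a2 choose (j - a1))"
          unfolding cC by simp
        also have "\<dots> = (fact a1 / fact (j - a2)) * (fact a2 / (fact (j - a1) * fact (a1 + a2 - j)))"
        proof -
          have h1: "(of_nat (fact a1 div fact (j - a2)) :: rat) = fact a1 / fact (j - a2)"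
            using fact_div_rat[of "j - a2" a1] ja by simp
          have h2: "(of_nat (a2 choose (j - a1)) :: rat) = fact a2 / (fact (j - a1) * fact (a1 + a2 - j))"
            using binomial_fact[OF r(1), where 'a=rat] k(3) by simp
          show ?thesis unfolding h1 h2 ..
        qed
        finally show ?thesis by (simp add: ac_simps)
      qed
      then show "(of_nat (g (j - a1)) :: rat) = ?coef j * B n j w"
        unfolding g_def B_eq using w ja by simp
    qed
    finally show ?thesis .
  qed
qed

end
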